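(* For every $n>3$, $\rho_T(P_n)=2$, where $P_n$ is the path on $n$ vertices.
   Context: Graphs are finite and simple. For $u,v\in(\mathbb{R}\cup\{\infty\})^k$ the min-plus tropical dot product is $u\odot v=\min_i(u_i+v_i)$. A min-plus $k$-tropical dot product representation of $G=(V,E)$ is a map $f:V\to(\mathbb{R}\cup\{\infty\})^k$ with a threshold $t>0$ such that for all distinct $x,y\in V$: $xy\in E$ iff $f(x)\odot f(y)\ge t$. $\rho_T(G)$ is the least $k\ge 1$ for which such a representation exists. *)

theory Defs
  imports Complex_Main "HOL-Library.Extended_Real"
begin

text \<open>Vectors in (R u {infinity})^k are modelled as functions nat => ereal, of which only
  the coordinates i < k are relevant, and these are required to be different from -infinity.\<close>

definition trop_dot :: "nat \<Rightarrow> (nat \<Rightarrow> ereal) \<Rightarrow> (nat \<Rightarrow> ereal) \<Rightarrow> ereal" where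
  "trop_dot k u v = Min ((\<lambda>i. u i + v i) ` {..<k})"

definition trop_rep :: "'a set \<Rightarrow> ('a \<Rightarrow> 'a \<Rightarrow> bool) \<Rightarrow> nat \<Rightarrow> ('a \<Rightarrow> nat \<Rightarrow> ereal) \<Rightarrow> real \<Rightarrow> bool" where
  "trop_rep V E k f t \<longleftrightarrow>
     t > 0 \<and>
     (\<forall>x\<in>V. \<forall>i<k. f x i \<noteq> -\<infinity>) \<and>
     (\<forall>x\<in>V. \<forall>y\<in>V. x \<noteq> y \<longrightarrow> (E x y \<longleftrightarrow> trop_dot k (f x) (f y) \<ge> ereal t))"

definition rho_T :: "'a set \<Rightarrow> ('a \<Rightarrow> 'a \<Rightarrow> bool) \<Rightarrow> nat" where
  "rho_T V E = (LEAST k. k \<ge> 1 \<and> (\<exists>f t. trop_rep V E k f t))"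

definition path_adj :: "nat \<Rightarrow> nat \<Rightarrow> bool" where
  "path_adj i j \<longleftrightarrow> i = j + 1 \<or> j = i + 1"

end

theory Submission
  imports Defs
begin

lemma dot1: "trop_dot 1 u v = u 0 + v 0"
  unfolding trop_dot_def by (simp add: lessThan_Suc)

lemma dot2: "trop_dot 2 u v = min (u 0 + v 0) (u 1 + v 1)"
proof -
  have "{..<2::nat} = {0,1}" by auto
  then show ?thesis unfolding trop_dot_def by (simp add: min.commute)
qed

lemma ereal_contra:
  fixes a b c d :: ereal and t :: real
  assumes "a \<noteq> -\<infinity>" "b \<noteq> -\<infinity>" "c \<noteq> -\<infinity>" "d \<noteq> -\<infinity>"
    "a + b \<ge> ereal t" "c + d \<ge> ereal t" "\<not> a + c \<ge> ereal t" "\<not> b + d \<ge> ereal t"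
  shows False
  using assms
  by (cases a; cases b; cases c; cases d) auto

lemma no1:
  assumes "n > 3" shows "\<not> trop_rep {..<n} path_adj 1 f t"
proof
  assume r: "trop_rep {..<n} path_adj 1 f t"
  have v: "\<And>x. x < n \<Longrightarrow> f x 0 \<noteq> -\<infinity>" using r unfolding trop_rep_def by auto
  have e: "\<And>x y. x < n \<Longrightarrow> y < n \<Longrightarrow> x \<noteq> y \<Longrightarrow> (path_adj x y \<longleftrightarrow> f x 0 + f y 0 \<ge> ereal t)"
    using r unfolding trop_rep_def dot1 by auto
  have "f 0 0 + f 1 0 \<ge> ereal t" using e[of 0 1] assms by (auto simp: path_adj_def)
  moreover have "f 2 0 + f 3 0 \<ge> ereal t" using e[of 2 3] assms by (auto simp: path_adj_def)
  moreover have "\<not> f 0 0 + f 2 0 \<ge> ereal t" using e[of 0 2] assms by (auto simp: path_adj_def)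
  moreover have "\<not> f 1 0 + f 3 0 \<ge> ereal t" using e[of 1 3] assms by (auto simp: path_adj_def)
  moreover have "f 0 0 \<noteq> -\<infinity>" "f 1 0 \<noteq> -\<infinity>" "f 2 0 \<noteq> -\<infinity>" "f 3 0 \<noteq> -\<infinity>"
    using v assms by auto
  ultimately show False using ereal_contra by blast
qed

definition sg :: "nat \<Rightarrow> int" where "sg x = (if even x then int x else - int x)"

lemma key: "x \<noteq> y \<Longrightarrow> (\<bar>sg x + sg y\<bar> \<le> 1 \<longleftrightarrow> path_adj x y)"
proof -
  assume "x \<noteq> y"
  obtain a where a: "x = 2*a \<or> x = 2*a+1" by (metis dvd_mult_div_cancel odd_two_times_div_two_succ)
  obtain b where b: "y = 2*b \<or> y = 2*b+1" by (metis dvd_mult_div_cancel odd_two_times_div_two_succ)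
  from a b \<open>x \<noteq> y\<close> show ?thesis unfolding sg_def path_adj_def by (elim disjE) (simp_all, arith+)
qed

definition F :: "nat \<Rightarrow> nat \<Rightarrow> ereal" where
  "F x i = ereal (if i = 0 then real_of_int (sg x) + 1 else - real_of_int (sg x) + 1)"

lemma yes2: "trop_rep {..<n} path_adj 2 F 1"
  unfolding trop_rep_def
proof (intro conjI ballI allI impI)
  fix x y :: nat assume "x \<noteq> y"
  have "trop_dot 2 (F x) (F y) = ereal (min (real_of_int (sg x + sg y)) (- real_of_int (sg x + sg y)) + 2)"
    unfolding dot2 F_def by (simp add: min_def)
  moreover have "(min (real_of_int (sg x + sg y)) (- real_of_int (sg x + sg y)) + 2 \<ge> 1)
      \<longleftrightarrow> \<bar>sg x + sg y\<bar> \<le> 1" by (auto simp: min_def abs_if)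
  ultimately show "path_adj x y = (ereal 1 \<le> trop_dot 2 (F x) (F y))"
    using key[OF \<open>x \<noteq> y\<close>] by simp
qed (auto simp: F_def)

theorem mainTheorem17:
  fixes n :: nat
  assumes "n > 3"
  shows "rho_T {..<n} path_adj = 2"
  unfolding rho_T_def
proof (rule Least_equality)
  show "2 \<ge> (1::nat) \<and> (\<exists>f t. trop_rep {..<n} path_adj 2 f t)" using yes2 by auto
next
  fix k assume "1 \<le> k \<and> (\<exists>f t. trop_rep {..<n} path_adj k f t)"
  then show "2 \<le> k" using no1[OF assms] by (cases "k = 1") auto
qed

end
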